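(* Let $n\ge1$ and let $X,Y$ be distinct elements of the group completion $K(\widetilde{Sp}(\mathbb{R}^n\times\mathbb{R}^n))$. Then there exists $(\mathbf a,\mathbf b)\in\mathbb{N}_+^n\times\mathbb{N}^n$ with $\varphi_X(p_{\mathbf a,\mathbf b})\neq\varphi_Y(p_{\mathbf a,\mathbf b})$.
   Context: A pair $(\mathbf z,\mathbf z')\in\mathbb{R}^n\times\mathbb{R}^n$ is degenerate if $z_j=z'_j$ for some $j$. $\widetilde{Sp}(\mathbb{R}^n\times\mathbb{R}^n)$ is the commutative monoid (under multiset union) of finite multisets of points of $\mathbb{R}^n\times\mathbb{R}^n$ modulo the equivalence relation generated by adding or removing degenerate pairs. Its group completion $K(\widetilde{Sp}(\mathbb{R}^n\times\mathbb{R}^n))$ consists of pairs $(X_+,X_-)$ modulo $(X_+,X_-)\sim(Y_+,Y_-)$ iff $X_++Y_-=Y_++X_-$. For $\mathbf a\in\mathbb{N}_+^n$ (all $a_j\ge1$), $\mathbf b\in\mathbb{N}^n$ and a multiset $X=\{(\mathbf x_i,\mathbf y_i)\}_{i=1}^r$, $p_{\mathbf a,\mathbf b}(X)=\sum_{i=1}^r\prod_{j=1}^n(y_{ij}-x_{ij})^{a_j}(y_{ij}+x_{ij})^{b_j}$, which is well defined on $\widetilde{Sp}$. For $X=(X_+,X_-)$, $\varphi_X(p_{\mathbf a,\mathbf b})=p_{\mathbf a,\mathbf b}(X_+)-p_{\mathbf a,\mathbf b}(X_-)$ (well defined on classes). *)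

theory Defs
  imports "HOL-Analysis.Analysis" "HOL-Library.Multiset"
begin

type_synonym 'n pt = "(real ^ 'n) \<times> (real ^ 'n)"

definition degenerate :: "'n::finite pt \<Rightarrow> bool" where
  "degenerate zz \<longleftrightarrow> (\<exists>j. fst zz $ j = snd zz $ j)"

definition sp_step :: "'n::finite pt multiset \<Rightarrow> 'n pt multiset \<Rightarrow> bool" where
  "sp_step A B \<longleftrightarrow> (\<exists>d. degenerate d \<and> (B = A + {#d#} \<or> A = B + {#d#}))"

text \<open>Equality in the monoid Sp~: the equivalence relation generated by the moves
  (the step relation is symmetric, so its reflexive-transitive closure is the generated equivalence).\<close>
definition sp_eq :: "'n::finite pt multiset \<Rightarrow> 'n pt multiset \<Rightarrow> bool" where
  "sp_eq = sp_step\<^sup>*\<^sup>*"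

text \<open>Equality in the group completion K: (P1,N1) ~ (P2,N2) iff P1 + N2 = P2 + N1 in Sp~.\<close>
definition K_eq :: "'n::finite pt multiset \<times> 'n pt multiset \<Rightarrow> 'n pt multiset \<times> 'n pt multiset \<Rightarrow> bool" where
  "K_eq X Y \<longleftrightarrow> sp_eq (fst X + snd Y) (fst Y + snd X)"

definition p_ab :: "nat ^ 'n \<Rightarrow> nat ^ 'n \<Rightarrow> 'n::finite pt multiset \<Rightarrow> real" where
  "p_ab a b X = (\<Sum>\<^sub># (image_mset (\<lambda>(x, y). \<Prod>j\<in>UNIV. (y $ j - x $ j) ^ (a $ j) * (y $ j + x $ j) ^ (b $ j)) X))"

definition phi :: "'n::finite pt multiset \<times> 'n pt multiset \<Rightarrow> nat ^ 'n \<Rightarrow> nat ^ 'n \<Rightarrow> real" where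
  "phi X a b = p_ab a b (fst X) - p_ab a b (snd X)"

end

theory Submission
  imports Defs
begin

lemma msum_conv:
  fixes f :: "'a \<Rightarrow> real"
  assumes "finite F" "set_mset A \<subseteq> F"
  shows "sum_mset (image_mset f A) = (\<Sum>p\<in>F. real (count A p) * f p)"
  using assms(2)
proof (induction A)
  case empty then show ?case by simp
next
  case (add x A)
  have xF: "x \<in> F" using add.prems by auto
  have "(\<Sum>p\<in>F. real (count (add_mset x A) p) * f p)
      = (\<Sum>p\<in>F. real (count A p) * f p) + (\<Sum>p\<in>F. (if p = x then f p else 0))"
    by (subst sum.distrib[symmetric], rule sum.cong, auto simp: algebra_simps)
  also have "(\<Sum>p\<in>F. (if p = x then f p else 0)) = f x"
    using xF assms(1) by (simp add: sum.delta)
  finally show ?case using add by auto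
qed

definition mono :: "nat ^ 'n \<Rightarrow> nat ^ 'n \<Rightarrow> 'n::finite pt \<Rightarrow> real" where
  "mono a b = (\<lambda>(x, y). \<Prod>j\<in>UNIV. (y $ j - x $ j) ^ (a $ j) * (y $ j + x $ j) ^ (b $ j))"

definition uu :: "'n \<Rightarrow> 'n::finite pt \<Rightarrow> real" where "uu k p = snd p $ k - fst p $ k"
definition vv :: "'n \<Rightarrow> 'n::finite pt \<Rightarrow> real" where "vv k p = snd p $ k + fst p $ k"

lemma prod_change:
  fixes h h' :: "'n::finite \<Rightarrow> real"
  assumes "h' k = h k * c" "\<And>j. j \<noteq> k \<Longrightarrow> h' j = h j"
  shows "(\<Prod>j\<in>UNIV. h' j) = (\<Prod>j\<in>UNIV. h j) * c"
proof -
  have "(\<Prod>j\<in>UNIV. h' j) = h' k * (\<Prod>j\<in>UNIV - {k}. h' j)"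
    by (simp add: prod.remove)
  also have "(\<Prod>j\<in>UNIV - {k}. h' j) = (\<Prod>j\<in>UNIV - {k}. h j)"
    using assms(2) by (intro prod.cong) auto
  also have "h' k * (\<Prod>j\<in>UNIV - {k}. h j) = (h k * (\<Prod>j\<in>UNIV - {k}. h j)) * c"
    using assms(1) by simp
  also have "h k * (\<Prod>j\<in>UNIV - {k}. h j) = (\<Prod>j\<in>UNIV. h j)"
    by (simp add: prod.remove)
  finally show ?thesis .
qed

lemma mono_u:
  "mono a b p * uu k p = mono (\<chi> j. if j = k then a $ j + 1 else a $ j) b p"
  unfolding mono_def uu_def
  by (cases p) (simp, rule prod_change[symmetric], auto)

lemma mono_v:
  "mono a b p * vv k p = mono a (\<chi> j. if j = k then b $ j + 1 else b $ j) p"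
  unfolding mono_def vv_def
  by (cases p) (simp, rule prod_change[symmetric], auto)

definition SS :: "'a set \<Rightarrow> 'a multiset \<Rightarrow> ('a \<Rightarrow> real) \<Rightarrow> real" where
  "SS F A f = (\<Sum>p\<in>F. real (count A p) * f p)"

definition QQ :: "'n::finite pt set \<Rightarrow> 'n pt multiset \<Rightarrow> 'n pt multiset \<Rightarrow> ('n pt \<Rightarrow> real) \<Rightarrow> bool" where
  "QQ F A B q \<longleftrightarrow> (\<forall>a b. (\<forall>j. a $ j \<ge> 1) \<longrightarrow>
      SS F A (\<lambda>p. mono a b p * q p) = SS F B (\<lambda>p. mono a b p * q p))"

definition Aff :: "('n::finite pt \<Rightarrow> real) set" where
  "Aff = {f. \<exists>k c1 c2 c3. f = (\<lambda>q. c1 * uu k q + c2 * vv k q + c3)}"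

lemma QQ_mult:
  assumes "QQ F A B q" "f \<in> Aff"
  shows "QQ F A B (\<lambda>p. q p * f p)"
proof -
  obtain k c1 c2 c3 where f: "f = (\<lambda>q. c1 * uu k q + c2 * vv k q + c3)"
    using assms(2) unfolding Aff_def by auto
  show ?thesis unfolding QQ_def
  proof (intro allI impI)
    fix a b :: "nat ^ 'a" assume a: "\<forall>j. a $ j \<ge> 1"
    define a' where "a' = (\<chi> j. if j = k then a $ j + 1 else a $ j)"
    define b' where "b' = (\<chi> j. if j = k then b $ j + 1 else b $ j)"
    have a': "\<forall>j. a' $ j \<ge> 1" using a unfolding a'_def by auto
    have eq: "\<And>p. mono a b p * (q p * f p) =
       c1 * (mono a' b p * q p) + c2 * (mono a b' p * q p) + c3 * (mono a b p * q p)"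
    proof -
      fix p
      have "mono a b p * (q p * f p) = c1 * ((mono a b p * uu k p) * q p)
          + c2 * ((mono a b p * vv k p) * q p) + c3 * (mono a b p * q p)"
        unfolding f by (simp add: algebra_simps)
      then show "?thesis p" unfolding a'_def b'_def mono_u mono_v .
    qed
    have h1: "SS F A (\<lambda>p. mono a' b p * q p) = SS F B (\<lambda>p. mono a' b p * q p)"
      using assms(1) a' unfolding QQ_def by blast
    have h2: "SS F A (\<lambda>p. mono a b' p * q p) = SS F B (\<lambda>p. mono a b' p * q p)"
      using assms(1) a unfolding QQ_def by blast
    have h3: "SS F A (\<lambda>p. mono a b p * q p) = SS F B (\<lambda>p. mono a b p * q p)"
      using assms(1) a unfolding QQ_def by blast
    have lin: "\<And>C. SS F C (\<lambda>p. mono a b p * (q p * f p)) =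
       c1 * SS F C (\<lambda>p. mono a' b p * q p) + c2 * SS F C (\<lambda>p. mono a b' p * q p)
       + c3 * SS F C (\<lambda>p. mono a b p * q p)"
      unfolding SS_def eq
      by (simp add: sum.distrib sum_distrib_left algebra_simps)
    show "SS F A (\<lambda>p. mono a b p * (q p * f p)) = SS F B (\<lambda>p. mono a b p * (q p * f p))"
      unfolding lin h1 h2 h3 ..
  qed
qed

lemma QQ_prod:
  assumes "QQ F A B (\<lambda>_. 1)" "finite T" "\<forall>p\<in>T. L p \<in> Aff"
  shows "QQ F A B (\<lambda>q. \<Prod>p\<in>T. L p q)"
  using assms(2,3)
proof (induction T rule: finite_induct)
  case empty then show ?case using assms(1) by simp
next
  case (insert x T)
  have "QQ F A B (\<lambda>q. (\<Prod>p\<in>T. L p q) * L x q)"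
    using insert by (intro QQ_mult) auto
  then show ?case using insert by (simp add: mult.commute)
qed

lemma sep:
  assumes "p \<noteq> p0"
  shows "\<exists>f\<in>Aff. f p = 0 \<and> f p0 \<noteq> 0"
proof -
  obtain k where k: "fst p $ k \<noteq> fst p0 $ k \<or> snd p $ k \<noteq> snd p0 $ k"
    using assms by (metis prod_eq_iff vec_eq_iff)
  show ?thesis
  proof (cases "uu k p = uu k p0")
    case True
    then have "vv k p \<noteq> vv k p0" using k unfolding uu_def vv_def by auto
    moreover have "(\<lambda>q. 0 * uu k q + 1 * vv k q + (- vv k p)) \<in> Aff" unfolding Aff_def by blast
    ultimately show ?thesis
      by (intro bexI[of _ "\<lambda>q. 0 * uu k q + 1 * vv k q + (- vv k p)"]) auto
  next
    case False
    moreover have "(\<lambda>q. 1 * uu k q + 0 * vv k q + (- uu k p)) \<in> Aff" unfolding Aff_def by blast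
    ultimately show ?thesis
      by (intro bexI[of _ "\<lambda>q. 1 * uu k q + 0 * vv k q + (- uu k p)"]) auto
  qed
qed

lemma counts_eq:
  fixes A B :: "'n::finite pt multiset"
  assumes hyp: "\<forall>a b. (\<forall>j. a $ j \<ge> 1) \<longrightarrow> p_ab a b A = p_ab a b B"
    and nd: "\<not> degenerate p0"
  shows "count A p0 = count B p0"
proof -
  define F where "F = set_mset A \<union> set_mset B"
  have fin: "finite F" unfolding F_def by simp
  show ?thesis
  proof (cases "p0 \<in> F")
    case False then show ?thesis unfolding F_def by (simp add: not_in_iff)
  next
    case p0F: True
    have Q1: "QQ F A B (\<lambda>_. 1)"
      unfolding QQ_def
    proof (intro allI impI)
      fix a b :: "nat ^ 'n" assume "\<forall>j. a $ j \<ge> 1"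
      then have "p_ab a b A = p_ab a b B" using hyp by blast
      moreover have "\<And>C. set_mset C \<subseteq> F \<Longrightarrow> p_ab a b C = SS F C (\<lambda>p. mono a b p * 1)"
        unfolding p_ab_def SS_def mono_def[symmetric] using fin by (simp add: msum_conv)
      ultimately show "SS F A (\<lambda>p. mono a b p * 1) = SS F B (\<lambda>p. mono a b p * 1)"
        unfolding F_def by auto
    qed
    define T where "T = F - {p0}"
    have "\<forall>p\<in>T. \<exists>f\<in>Aff. f p = 0 \<and> f p0 \<noteq> 0" unfolding T_def using sep by blast
    then obtain L where L: "\<forall>p\<in>T. L p \<in> Aff \<and> L p p = 0 \<and> L p p0 \<noteq> 0"
      by metis
    define g where "g = (\<lambda>q. \<Prod>p\<in>T. L p q)"
    have finT: "finite T" unfolding T_def using fin by simp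
    have Qg: "QQ F A B g" unfolding g_def using QQ_prod[OF Q1 finT] L by blast
    have g0: "g p0 \<noteq> 0" unfolding g_def using L finT by simp
    have gT: "\<And>p. p \<in> T \<Longrightarrow> g p = 0" unfolding g_def using L finT
      by (metis prod_zero_iff)
    define one :: "nat ^ 'n" where "one = (\<chi> j. 1)"
    have m0: "mono one 0 p0 \<noteq> 0"
      using nd unfolding mono_def one_def degenerate_def
      by (cases p0) (auto, metis)
    have SSv: "\<And>C. SS F C (\<lambda>p. mono one 0 p * g p) = real (count C p0) * (mono one 0 p0 * g p0)"
    proof -
      fix C :: "'n pt multiset"
      have "SS F C (\<lambda>p. mono one 0 p * g p) =
        real (count C p0) * (mono one 0 p0 * g p0) + (\<Sum>p\<in>F - {p0}. real (count C p) * (mono one 0 p * g p))"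
        unfolding SS_def using fin p0F by (simp add: sum.remove)
      also have "(\<Sum>p\<in>F - {p0}. real (count C p) * (mono one 0 p * g p)) = 0"
        using gT unfolding T_def by simp
      finally show "?thesis C" by simp
    qed
    have "SS F A (\<lambda>p. mono one 0 p * g p) = SS F B (\<lambda>p. mono one 0 p * g p)"
      using Qg unfolding QQ_def one_def by auto
    then have "real (count A p0) = real (count B p0)"
      unfolding SSv using m0 g0 by simp
    then show ?thesis by simp
  qed
qed

lemma sp_eq_add:
  assumes "sp_eq A B" shows "sp_eq (A + C) (B + C)"
  using assms unfolding sp_eq_def
proof (induction rule: rtranclp_induct)
  case base then show ?case by simp
next
  case (step y z)
  have "sp_step (y + C) (z + C)" using step(2) unfolding sp_step_def
    by (metis add.assoc add.commute)
  then show ?case using step(3) by (simp add: rtranclp.rtrancl_into_rtrancl)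
qed

lemma sp_eq_filter: "sp_eq A (filter_mset (\<lambda>d. \<not> degenerate d) A)"
proof (induction A)
  case empty then show ?case unfolding sp_eq_def by simp
next
  case (add x A)
  show ?case
  proof (cases "degenerate x")
    case True
    have "sp_step (add_mset x A) A" unfolding sp_step_def using True by (intro exI[of _ x]) simp
    then show ?thesis using add True unfolding sp_eq_def
      by (simp add: converse_rtranclp_into_rtranclp)
  next
    case False
    have "sp_eq (A + {#x#}) (filter_mset (\<lambda>d. \<not> degenerate d) A + {#x#})"
      by (rule sp_eq_add[OF add])
    then show ?thesis using False by simp
  qed
qed

lemma sp_eq_sym: "sp_eq A B \<Longrightarrow> sp_eq B A"
proof -
  have "symp sp_step" unfolding symp_def sp_step_def by blast
  then show "sp_eq A B \<Longrightarrow> sp_eq B A" unfolding sp_eq_def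
    by (metis sympD symp_rtranclp)
qed

lemma main_sp:
  fixes A B :: "'n::finite pt multiset"
  assumes hyp: "\<forall>a b. (\<forall>j. a $ j \<ge> 1) \<longrightarrow> p_ab a b A = p_ab a b B"
  shows "sp_eq A B"
proof -
  have "filter_mset (\<lambda>d. \<not> degenerate d) A = filter_mset (\<lambda>d. \<not> degenerate d) B"
    using counts_eq[OF hyp] by (auto simp: multiset_eq_iff)
  then show ?thesis using sp_eq_filter[of A] sp_eq_sym[OF sp_eq_filter[of B]]
    unfolding sp_eq_def by (metis rtranclp_trans)
qed

lemma p_ab_plus: "p_ab a b (A + B) = p_ab a b A + p_ab a b B"
  unfolding p_ab_def by simp

theorem lemma4p7:
  fixes X Y :: "'n::finite pt multiset \<times> 'n pt multiset"
  assumes "\<not> K_eq X Y"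
  shows "\<exists>a b :: nat ^ 'n. (\<forall>j. a $ j \<ge> 1) \<and> phi X a b \<noteq> phi Y a b"
proof (rule ccontr)
  assume "\<not> ?thesis"
  then have h: "\<forall>a b :: nat ^ 'n. (\<forall>j. a $ j \<ge> 1) \<longrightarrow> phi X a b = phi Y a b" by blast
  have "\<forall>a b :: nat ^ 'n. (\<forall>j. a $ j \<ge> 1) \<longrightarrow>
      p_ab a b (fst X + snd Y) = p_ab a b (fst Y + snd X)"
    using h unfolding phi_def p_ab_plus by (auto simp: algebra_simps)
  then have "sp_eq (fst X + snd Y) (fst Y + snd X)" by (rule main_sp)
  then show False using assms unfolding K_eq_def by simp
qed

end
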